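(* Let $T$ be a strongly consistent $\mathcal{L}$-theory in $RGL^*$. Then $T$ is maximally strongly consistent if and only if (1) for all $\mathcal{L}$-sentences $\varphi,\psi$, either $\varphi\to\psi\in T$ or $\psi\to\varphi\in T$; and (2) whenever $\varphi$ is an $\mathcal{L}$-sentence with $T\vdash\bar r\to\varphi$ for all rationals $r\in(0,1]$, then $\varphi\in T$.
   Context: $\mathcal{L}$ is a first-order language with countably many predicate, function and constant symbols. Formulas of $RGL^*$ are built from atomic formulas and the nullary connectives $\bar r$ ($r\in[0,1]\cap\mathbb{Q}$, including $\bar0,\bar1$) by $\wedge,\to,\forall,\exists$; $\neg\varphi:=\varphi\to\bar1$, $\varphi\vee\psi:=((\varphi\to\psi)\to\psi)\wedge((\psi\to\varphi)\to\varphi)$, $\varphi\leftrightarrow\psi:=(\varphi\to\psi)\wedge(\psi\to\varphi)$. Proof system $\vdash$: all instances of (G1) $(\varphi\to\psi)\to((\psi\to\chi)\to(\varphi\to\chi))$; (G2) $(\varphi\wedge\psi)\to\varphi$; (G3) $(\varphi\wedge\psi)\to(\psi\wedge\varphi)$; (G4) $\varphi\to(\varphi\wedge\varphi)$; (G5) $(\varphi\to(\psi\to\chi))\leftrightarrow((\varphi\wedge\psi)\to\chi)$; (G6) $((\varphi\to\psi)\to\chi)\to(((\psi\to\varphi)\to\chi)\to\chi)$; (G7) $\bar1\to\varphi$; (G$\forall$1) $(\forall x\,\varphi(x))\to\varphi(t)$; (G$\forall$2) $\forall x(\psi\to\varphi(x))\to(\psi\to\forall x\,\varphi(x))$; (G$\forall$3)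 $\forall x(\psi\vee\varphi(x))\to(\psi\vee\forall x\,\varphi(x))$; (G$\exists$1) $\varphi(t)\to\exists x\,\varphi(x)$; (G$\exists$2) $\exists x(\psi\to\varphi(x))\to(\psi\to\exists x\,\varphi(x))$ (with $t$ substitutable for $x$ and $x$ not free in $\psi$); (RGL1) $(\bar r\wedge\bar s)\leftrightarrow\overline{\max\{r,s\}}$; (RGL2) $\bar r\to\bar s$ if $r\ge s$, $(\bar r\to\bar s)\leftrightarrow\bar s$ if $r<s$; (RGL3) $\neg\neg\bar r$ for $r<1$. Rules: modus ponens and generalization. A theory $T$ is strongly consistent if $T\nvdash\bar r$ for every rational $r\in(0,1]$; it is maximally strongly consistent if it is strongly consistent and every strongly consistent $\mathcal{L}$-theory $\Sigma\supseteq T$ equals $T$. *)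

theory Defs
  imports Main "HOL-Library.Countable"
begin

typedef qunit = "{r::rat. 0 \<le> r \<and> r \<le> 1}"
  by (rule exI[of _ 0]) auto

definition qone :: qunit where "qone = Abs_qunit 1"

definition qmax :: "qunit \<Rightarrow> qunit \<Rightarrow> qunit" where
  "qmax r s = (if Rep_qunit r \<le> Rep_qunit s then s else r)"

text \<open>Function symbols of type 'f (constants are 0-ary function symbols), predicate
  symbols of type 'p; both countable. Variables are natural numbers.\<close>

datatype 'f tm = Var nat | Fn 'f "'f tm list"

datatype ('p, 'f) fm =
    Atom 'p "'f tm list"
  | Cst qunit
  | Conj "('p, 'f) fm" "('p, 'f) fm"
  | Imp "('p, 'f) fm" "('p, 'f) fm"
  | All nat "('p, 'f) fm"
  | Ex nat "('p, 'f) fm"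

definition Neg :: "('p, 'f) fm \<Rightarrow> ('p, 'f) fm" where
  "Neg \<phi> = Imp \<phi> (Cst qone)"

definition Disj :: "('p, 'f) fm \<Rightarrow> ('p, 'f) fm \<Rightarrow> ('p, 'f) fm" where
  "Disj \<phi> \<psi> = Conj (Imp (Imp \<phi> \<psi>) \<psi>) (Imp (Imp \<psi> \<phi>) \<phi>)"

definition Iff :: "('p, 'f) fm \<Rightarrow> ('p, 'f) fm \<Rightarrow> ('p, 'f) fm" where
  "Iff \<phi> \<psi> = Conj (Imp \<phi> \<psi>) (Imp \<psi> \<phi>)"

fun fvt :: "'f tm \<Rightarrow> nat set" where
  "fvt (Var x) = {x}"
| "fvt (Fn f ts) = (\<Union>t\<in>set ts. fvt t)"

fun fv :: "('p, 'f) fm \<Rightarrow> nat set" where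
  "fv (Atom p ts) = (\<Union>t\<in>set ts. fvt t)"
| "fv (Cst r) = {}"
| "fv (Conj \<phi> \<psi>) = fv \<phi> \<union> fv \<psi>"
| "fv (Imp \<phi> \<psi>) = fv \<phi> \<union> fv \<psi>"
| "fv (All x \<phi>) = fv \<phi> - {x}"
| "fv (Ex x \<phi>) = fv \<phi> - {x}"

definition sentence :: "('p, 'f) fm \<Rightarrow> bool" where
  "sentence \<phi> \<longleftrightarrow> fv \<phi> = {}"

fun substt :: "nat \<Rightarrow> 'f tm \<Rightarrow> 'f tm \<Rightarrow> 'f tm" where
  "substt x t (Var y) = (if y = x then t else Var y)"
| "substt x t (Fn f ts) = Fn f (map (substt x t) ts)"

text \<open>Substitution of t for the free occurrences of x (no renaming).\<close>
fun subst :: "nat \<Rightarrow> 'f tm \<Rightarrow> ('p, 'f) fm \<Rightarrow> ('p, 'f) fm" where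
  "subst x t (Atom p ts) = Atom p (map (substt x t) ts)"
| "subst x t (Cst r) = Cst r"
| "subst x t (Conj \<phi> \<psi>) = Conj (subst x t \<phi>) (subst x t \<psi>)"
| "subst x t (Imp \<phi> \<psi>) = Imp (subst x t \<phi>) (subst x t \<psi>)"
| "subst x t (All y \<phi>) = (if y = x then All y \<phi> else All y (subst x t \<phi>))"
| "subst x t (Ex y \<phi>) = (if y = x then Ex y \<phi> else Ex y (subst x t \<phi>))"

fun substitutable :: "nat \<Rightarrow> 'f tm \<Rightarrow> ('p, 'f) fm \<Rightarrow> bool" where
  "substitutable x t (Atom p ts) = True"
| "substitutable x t (Cst r) = True"
| "substitutable x t (Conj \<phi> \<psi>) = (substitutable x t \<phi> \<and> substitutable x t \<psi>)"
| "substitutable x t (Imp \<phi> \<psi>) = (substitutable x t \<phi> \<and> substitutable x t \<psi>)"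
| "substitutable x t (All y \<phi>) =
     (x \<notin> fv (All y \<phi>) \<or> (y \<notin> fvt t \<and> substitutable x t \<phi>))"
| "substitutable x t (Ex y \<phi>) =
     (x \<notin> fv (Ex y \<phi>) \<or> (y \<notin> fvt t \<and> substitutable x t \<phi>))"

inductive axiom :: "('p, 'f) fm \<Rightarrow> bool" where
  G1: "axiom (Imp (Imp \<phi> \<psi>) (Imp (Imp \<psi> \<chi>) (Imp \<phi> \<chi>)))"
| G2: "axiom (Imp (Conj \<phi> \<psi>) \<phi>)"
| G3: "axiom (Imp (Conj \<phi> \<psi>) (Conj \<psi> \<phi>))"
| G4: "axiom (Imp \<phi> (Conj \<phi> \<phi>))"
| G5: "axiom (Iff (Imp \<phi> (Imp \<psi> \<chi>)) (Imp (Conj \<phi> \<psi>) \<chi>))"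
| G6: "axiom (Imp (Imp (Imp \<phi> \<psi>) \<chi>) (Imp (Imp (Imp \<psi> \<phi>) \<chi>) \<chi>))"
| G7: "axiom (Imp (Cst qone) \<phi>)"
| GAll1: "substitutable x t \<phi> \<Longrightarrow> axiom (Imp (All x \<phi>) (subst x t \<phi>))"
| GAll2: "x \<notin> fv \<psi> \<Longrightarrow> axiom (Imp (All x (Imp \<psi> \<phi>)) (Imp \<psi> (All x \<phi>)))"
| GAll3: "x \<notin> fv \<psi> \<Longrightarrow> axiom (Imp (All x (Disj \<psi> \<phi>)) (Disj \<psi> (All x \<phi>)))"
| GEx1: "substitutable x t \<phi> \<Longrightarrow> axiom (Imp (subst x t \<phi>) (Ex x \<phi>))"
| GEx2: "x \<notin> fv \<psi> \<Longrightarrow> axiom (Imp (Ex x (Imp \<psi> \<phi>)) (Imp \<psi> (Ex x \<phi>)))"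
| RGL1: "axiom (Iff (Conj (Cst r) (Cst s)) (Cst (qmax r s)))"
| RGL2a: "Rep_qunit r \<ge> Rep_qunit s \<Longrightarrow> axiom (Imp (Cst r) (Cst s))"
| RGL2b: "Rep_qunit r < Rep_qunit s \<Longrightarrow> axiom (Iff (Imp (Cst r) (Cst s)) (Cst s))"
| RGL3: "Rep_qunit r < 1 \<Longrightarrow> axiom (Neg (Neg (Cst r)))"

inductive derivable :: "('p, 'f) fm set \<Rightarrow> ('p, 'f) fm \<Rightarrow> bool" (infix "\<turnstile>" 55)
  for T :: "('p, 'f) fm set" where
  ax: "axiom \<phi> \<Longrightarrow> T \<turnstile> \<phi>"
| hyp: "\<phi> \<in> T \<Longrightarrow> T \<turnstile> \<phi>"
| mp: "T \<turnstile> \<phi> \<Longrightarrow> T \<turnstile> Imp \<phi> \<psi> \<Longrightarrow> T \<turnstile> \<psi>"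
| gen: "T \<turnstile> \<phi> \<Longrightarrow> T \<turnstile> All x \<phi>"

definition is_theory :: "('p, 'f) fm set \<Rightarrow> bool" where
  "is_theory T \<longleftrightarrow> (\<forall>\<phi>\<in>T. sentence \<phi>)"

definition strongly_consistent :: "('p, 'f) fm set \<Rightarrow> bool" where
  "strongly_consistent T \<longleftrightarrow> (\<forall>r. 0 < Rep_qunit r \<longrightarrow> \<not> T \<turnstile> Cst r)"

definition max_strongly_consistent :: "('p, 'f) fm set \<Rightarrow> bool" where
  "max_strongly_consistent T \<longleftrightarrow> strongly_consistent T \<and>
     (\<forall>\<Sigma>. is_theory \<Sigma> \<longrightarrow> strongly_consistent \<Sigma> \<longrightarrow> T \<subseteq> \<Sigma> \<longrightarrow> \<Sigma> = T)"

end

theory Submission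
  imports Defs
begin

lemma conjE1: "T \<turnstile> Conj a b \<Longrightarrow> T \<turnstile> a"
  by (rule derivable.mp, assumption, rule derivable.ax, rule axiom.G2)

lemma conjE2: "T \<turnstile> Conj a b \<Longrightarrow> T \<turnstile> b"
  apply (rule conjE1[where b=a])
  apply (rule derivable.mp, assumption, rule derivable.ax, rule axiom.G3)
  done

lemma iffD1': "T \<turnstile> Iff a b \<Longrightarrow> T \<turnstile> Imp a b"
  unfolding Iff_def by (rule conjE1)

lemma iffD2': "T \<turnstile> Iff a b \<Longrightarrow> T \<turnstile> Imp b a"
  unfolding Iff_def by (rule conjE2)

lemma axd: "axiom a \<Longrightarrow> T \<turnstile> a" by (rule derivable.ax)

lemma trans': "T \<turnstile> Imp a b \<Longrightarrow> T \<turnstile> Imp b c \<Longrightarrow> T \<turnstile> Imp a c"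
  by (meson axiom.G1 derivable.ax derivable.mp)

lemma curry': "T \<turnstile> Imp (Conj a b) c \<Longrightarrow> T \<turnstile> Imp a (Imp b c)"
  by (meson axiom.G5 derivable.ax derivable.mp iffD2')

lemma uncurry': "T \<turnstile> Imp a (Imp b c) \<Longrightarrow> T \<turnstile> Imp (Conj a b) c"
  by (meson axiom.G5 derivable.ax derivable.mp iffD1')

lemma swap': "T \<turnstile> Imp a (Imp b c) \<Longrightarrow> T \<turnstile> Imp b (Imp a c)"
  by (meson axiom.G3 axd curry' trans' uncurry')

lemma contract': "T \<turnstile> Imp a (Imp a c) \<Longrightarrow> T \<turnstile> Imp a c"
  by (meson axiom.G4 axd trans' uncurry')

lemma K': "T \<turnstile> Imp a (Imp b a)"
  by (meson axiom.G2 axd curry')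

lemma Kr: "T \<turnstile> a \<Longrightarrow> T \<turnstile> Imp b a"
  by (meson K' derivable.mp)

lemma idd: "T \<turnstile> Imp a a"
  by (meson axiom.G2 axiom.G4 axd trans')

lemma deduction:
  assumes "insert \<chi> T \<turnstile> \<theta>" "fv \<chi> = {}"
  shows "T \<turnstile> Imp \<chi> \<theta>"
  using assms(1)
proof (induct rule: derivable.induct)
  case (ax \<phi>)
  then show ?case by (meson Kr derivable.ax)
next
  case (hyp \<phi>)
  then show ?case by (metis Kr derivable.hyp idd insertE)
next
  case (mp \<phi> \<psi>)
  then show ?case by (meson contract' swap' trans')
next
  case (gen \<phi> x)
  have "T \<turnstile> All x (Imp \<chi> \<phi>)" using gen(2) by (rule derivable.gen)
  moreover have "T \<turnstile> Imp (All x (Imp \<chi> \<phi>)) (Imp \<chi> (All x \<phi>))"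
    by (rule derivable.ax, rule axiom.GAll2, simp add: assms(2))
  ultimately show ?case by (rule derivable.mp)
qed

theorem mainTheorem7:
  fixes T :: "('p::countable, 'f::countable) fm set"
  assumes "is_theory T" and "strongly_consistent T"
  shows "max_strongly_consistent T \<longleftrightarrow>
    ((\<forall>\<phi> \<psi>. sentence \<phi> \<longrightarrow> sentence \<psi> \<longrightarrow> Imp \<phi> \<psi> \<in> T \<or> Imp \<psi> \<phi> \<in> T) \<and>
     (\<forall>\<phi>. sentence \<phi> \<longrightarrow> (\<forall>r. 0 < Rep_qunit r \<longrightarrow> T \<turnstile> Imp (Cst r) \<phi>) \<longrightarrow> \<phi> \<in> T))"
proof
  assume M: "max_strongly_consistent T"
  have ins: "\<chi> \<in> T" if "sentence \<chi>" "strongly_consistent (insert \<chi> T)" for \<chi>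
  proof -
    have "is_theory (insert \<chi> T)" using assms(1) that(1) by (simp add: is_theory_def)
    then have "insert \<chi> T = T" using M that(2) unfolding max_strongly_consistent_def by blast
    then show ?thesis by blast
  qed
  have A: "\<exists>r. 0 < Rep_qunit r \<and> T \<turnstile> Imp \<chi> (Cst r)" if "sentence \<chi>" "\<chi> \<notin> T" for \<chi>
  proof -
    have "\<not> strongly_consistent (insert \<chi> T)" using ins that by blast
    then obtain r where "0 < Rep_qunit r" "insert \<chi> T \<turnstile> Cst r"
      unfolding strongly_consistent_def by blast
    moreover have "fv \<chi> = {}" using that(1) by (simp add: sentence_def)
    ultimately show ?thesis using deduction by blast
  qed
  show "(\<forall>\<phi> \<psi>. sentence \<phi> \<longrightarrow> sentence \<psi> \<longrightarrow> Imp \<phi> \<psi> \<in> T \<or> Imp \<psi> \<phi> \<in> T) \<and>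
     (\<forall>\<phi>. sentence \<phi> \<longrightarrow> (\<forall>r. 0 < Rep_qunit r \<longrightarrow> T \<turnstile> Imp (Cst r) \<phi>) \<longrightarrow> \<phi> \<in> T)"
  proof (intro conjI allI impI)
    fix \<phi> \<psi> :: "('p, 'f) fm"
    assume s: "sentence \<phi>" "sentence \<psi>"
    show "Imp \<phi> \<psi> \<in> T \<or> Imp \<psi> \<phi> \<in> T"
    proof (rule ccontr)
      assume n: "\<not> (Imp \<phi> \<psi> \<in> T \<or> Imp \<psi> \<phi> \<in> T)"
      have s1: "sentence (Imp \<phi> \<psi>)" "sentence (Imp \<psi> \<phi>)" using s by (auto simp: sentence_def)
      obtain r where r: "0 < Rep_qunit r" "T \<turnstile> Imp (Imp \<phi> \<psi>) (Cst r)" using A s1 n by blast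
      obtain q where q: "0 < Rep_qunit q" "T \<turnstile> Imp (Imp \<psi> \<phi>) (Cst q)" using A s1 n by blast
      define m where "m = (if Rep_qunit r \<le> Rep_qunit q then r else q)"
      have m0: "0 < Rep_qunit m" using r q by (simp add: m_def)
      have "T \<turnstile> Imp (Cst r) (Cst m)"
        by (rule derivable.ax, rule axiom.RGL2a, simp add: m_def)
      with r(2) have a1: "T \<turnstile> Imp (Imp \<phi> \<psi>) (Cst m)" by (rule trans')
      have "T \<turnstile> Imp (Cst q) (Cst m)"
        by (rule derivable.ax, rule axiom.RGL2a, simp add: m_def)
      with q(2) have a2: "T \<turnstile> Imp (Imp \<psi> \<phi>) (Cst m)" by (rule trans')
      have "T \<turnstile> Cst m"
        by (meson a1 a2 axiom.G6 derivable.ax derivable.mp)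
      then show False using assms(2) m0 unfolding strongly_consistent_def by blast
    qed
  next
    fix \<phi> :: "('p, 'f) fm"
    assume s: "sentence \<phi>" and H: "\<forall>r. 0 < Rep_qunit r \<longrightarrow> T \<turnstile> Imp (Cst r) \<phi>"
    show "\<phi> \<in> T"
    proof (rule ccontr)
      assume "\<phi> \<notin> T"
      then obtain q where q: "0 < Rep_qunit q" "T \<turnstile> Imp \<phi> (Cst q)" using A s by blast
      define r where "r = Abs_qunit (Rep_qunit q / 2)"
      have "0 \<le> Rep_qunit q" "Rep_qunit q \<le> 1" using Rep_qunit[of q] by auto
      then have rr: "Rep_qunit r = Rep_qunit q / 2" unfolding r_def
        by (simp add: Abs_qunit_inverse)
      have r0: "0 < Rep_qunit r" "Rep_qunit r < Rep_qunit q" using q(1) rr by auto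
      have "T \<turnstile> Imp (Cst r) (Cst q)" using H r0(1) q(2) trans' by blast
      moreover have "T \<turnstile> Imp (Imp (Cst r) (Cst q)) (Cst q)"
        by (rule iffD1', rule derivable.ax, rule axiom.RGL2b, rule r0(2))
      ultimately have "T \<turnstile> Cst q" by (rule derivable.mp)
      then show False using assms(2) q(1) unfolding strongly_consistent_def by blast
    qed
  qed
next
  assume H: "(\<forall>\<phi> \<psi>. sentence \<phi> \<longrightarrow> sentence \<psi> \<longrightarrow> Imp \<phi> \<psi> \<in> T \<or> Imp \<psi> \<phi> \<in> T) \<and>
     (\<forall>\<phi>. sentence \<phi> \<longrightarrow> (\<forall>r. 0 < Rep_qunit r \<longrightarrow> T \<turnstile> Imp (Cst r) \<phi>) \<longrightarrow> \<phi> \<in> T)"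
  show "max_strongly_consistent T"
    unfolding max_strongly_consistent_def
  proof (intro conjI allI impI)
    show "strongly_consistent T" by (rule assms(2))
    fix \<Sigma> :: "('p, 'f) fm set"
    assume th: "is_theory \<Sigma>" and sc: "strongly_consistent \<Sigma>" and sub: "T \<subseteq> \<Sigma>"
    have "\<phi> \<in> T" if "\<phi> \<in> \<Sigma>" for \<phi>
    proof -
      have s: "sentence \<phi>" using th that by (simp add: is_theory_def)
      have "T \<turnstile> Imp (Cst r) \<phi>" if r: "0 < Rep_qunit r" for r
      proof -
        have sr: "sentence (Cst r :: ('p, 'f) fm)" by (simp add: sentence_def)
        have "Imp \<phi> (Cst r) \<notin> T"
        proof
          assume "Imp \<phi> (Cst r) \<in> T"
          then have "\<Sigma> \<turnstile> Imp \<phi> (Cst r)" using sub by (blast intro: derivable.hyp)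
          moreover have "\<Sigma> \<turnstile> \<phi>" using \<open>\<phi> \<in> \<Sigma>\<close> by (rule derivable.hyp)
          ultimately have "\<Sigma> \<turnstile> Cst r" by (blast intro: derivable.mp)
          then show False using sc r unfolding strongly_consistent_def by blast
        qed
        then have "Imp (Cst r) \<phi> \<in> T" using H s sr by blast
        then show ?thesis by (rule derivable.hyp)
      qed
      then show ?thesis using H s by blast
    qed
    then show "\<Sigma> = T" using sub by blast
  qed
qed

end
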